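(* Let $G$ be an edge-colored graph of order $n\ge 1$. If $e(G)+c(G)\geq \binom{n+1}{2}-1$ and $G$ contains no rainbow triangle, then $G$ belongs to $\mathcal{G}_0$.
   Context: An edge-colored graph is a finite simple graph $G$ with a map $C:E(G)\to\mathbb{N}$. $e(G)=|E(G)|$, $c(G)$ is the number of distinct colors appearing on $E(G)$. A subgraph is rainbow if all its edges have distinct colors, monochromatic if all its edges have the same color. For disjoint $S,S'\subseteq V(G)$, $G[S,S']$ is the bipartite subgraph with classes $S,S'$ and all edges of $G$ between $S$ and $S'$. The family $\mathcal{G}_0$ of edge-colored complete graphs is defined recursively: $K_1\in\mathcal{G}_0$; an edge-colored complete graph $G$ of order $n\ge 2$ belongs to $\mathcal{G}_0$ iff $c(G)=n-1$ and there is a partition $V(G)=V_1\cup V_2$ into nonempty sets such that $G[V_1,V_2]$ is monochromatic and $G[V_i]\in\mathcal{G}_0$ for $i=1,2$. *)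

theory Defs
  imports Main
begin

text \<open>An edge-colored graph is given by a finite vertex set V, an edge set E of
2-element subsets of V, and a colouring C : edges -> nat (given as a total
function on vertex sets; only its values on E matter).\<close>

definition all_edges :: "'a set \<Rightarrow> 'a set set" where
  "all_edges V = {e. e \<subseteq> V \<and> card e = 2}"

definition is_graph :: "'a set \<Rightarrow> 'a set set \<Rightarrow> bool" where
  "is_graph V E \<longleftrightarrow> finite V \<and> E \<subseteq> all_edges V"

definition num_colors :: "'a set set \<Rightarrow> ('a set \<Rightarrow> nat) \<Rightarrow> nat" where
  "num_colors E C = card (C ` E)"

definition has_rainbow_triangle :: "'a set set \<Rightarrow> ('a set \<Rightarrow> nat) \<Rightarrow> bool" where
  "has_rainbow_triangle E C \<longleftrightarrow>
     (\<exists>x y z. x \<noteq> y \<and> y \<noteq> z \<and> x \<noteq> z \<and>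
        {x,y} \<in> E \<and> {y,z} \<in> E \<and> {x,z} \<in> E \<and>
        C {x,y} \<noteq> C {y,z} \<and> C {y,z} \<noteq> C {x,z} \<and> C {x,y} \<noteq> C {x,z})"

text \<open>The family G_0 of edge-colored complete graphs: G0 V C means the complete
graph on V with colouring C belongs to G_0.\<close>
inductive G0 :: "'a set \<Rightarrow> ('a set \<Rightarrow> nat) \<Rightarrow> bool" where
  single: "G0 {v} C"
| split: "\<lbrakk> finite V; card V \<ge> 2;
            num_colors (all_edges V) C = card V - 1;
            V1 \<union> V2 = V; V1 \<inter> V2 = {}; V1 \<noteq> {}; V2 \<noteq> {};
            \<exists>c. \<forall>x\<in>V1. \<forall>y\<in>V2. C {x,y} = c;
            G0 V1 C; G0 V2 C \<rbrakk> \<Longrightarrow> G0 V C"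

end

theory Submission
  imports Defs
begin

lemma all_edges_mono: "A \<subseteq> B \<Longrightarrow> all_edges A \<subseteq> all_edges B"
  unfolding all_edges_def by auto

lemma no_rb_mono: "E1 \<subseteq> E2 \<Longrightarrow> \<not> has_rainbow_triangle E2 C \<Longrightarrow> \<not> has_rainbow_triangle E1 C"
  unfolding has_rainbow_triangle_def by blast

lemma edge_in_all: "x \<in> V \<Longrightarrow> y \<in> V \<Longrightarrow> x \<noteq> y \<Longrightarrow> {x,y} \<in> all_edges V"
  unfolding all_edges_def by auto

lemma all_edgesE: "e \<in> all_edges V \<Longrightarrow> \<exists>x y. e = {x,y} \<and> x \<noteq> y \<and> x \<in> V \<and> y \<in> V"
  unfolding all_edges_def by (auto simp: card_2_iff)

lemma no_rb: "\<not> has_rainbow_triangle E C \<Longrightarrow> x\<noteq>y \<Longrightarrow> y\<noteq>z \<Longrightarrow> x\<noteq>z \<Longrightarrow> {x,y}\<in>E \<Longrightarrow> {y,z}\<in>E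
  \<Longrightarrow> {x,z}\<in>E \<Longrightarrow> C{x,y}\<noteq>C{y,z} \<Longrightarrow> C{x,y}\<noteq>C{x,z} \<Longrightarrow> C{y,z} = C{x,z}"
  unfolding has_rainbow_triangle_def by blast

lemma all_edges_single: "all_edges {v} = {}"
  unfolding all_edges_def by (auto simp: subset_singleton_iff)

lemma card_all_edges: "finite V \<Longrightarrow> 2 * card (all_edges V) = card V * (card V - 1)"
proof -
  assume "finite V"
  hence "card (all_edges V) = card V choose 2" unfolding all_edges_def by (rule n_subsets)
  moreover have "even (card V * (card V - 1))" by (cases "card V") auto
  ultimately show ?thesis by (simp add: choose_two)
qed

lemma fin_all_edges: "finite V \<Longrightarrow> finite (all_edges V)"
  unfolding all_edges_def by (rule finite_subset[of _ "Pow V"]) auto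

lemma arith3: "2*(a'+c'+1) \<le> (P::nat) \<Longrightarrow> d+k \<le> n \<Longrightarrow> a = a'+d \<Longrightarrow> c \<le> c'+k \<Longrightarrow> Q = P + 2*n
  \<Longrightarrow> 2*(a+c+1) \<le> Q \<and> (2*(a+c+1) = Q \<longrightarrow> 2*(a'+c'+1) = P \<and> d+k = n)"
proof -
  assume h: "2*(a'+c'+1) \<le> (P::nat)" "d+k \<le> n" "a = a'+d" "c \<le> c'+k" "Q = P + 2*n"
  have 1: "2*(a+c+1) \<le> Q" using h by arith
  have 2: "2*(a'+c'+1) = P" if "2*(a+c+1) = Q" using h that by simp
  have 3: "d+k = n" if "2*(a+c+1) = Q" using h that by simp
  show ?thesis using 1 2 3 by blast
qed

lemma ineq:
  assumes "finite V" "V \<noteq> {}" "E \<subseteq> all_edges V" "\<not> has_rainbow_triangle E C"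
  shows "2*(card E + card (C`E) + 1) \<le> card V * (card V + 1) \<and>
    (2*(card E + card (C`E) + 1) = card V * (card V + 1) \<longrightarrow> E = all_edges V)"
  using assms
proof (induction "card V" arbitrary: V E rule: less_induct)
  case less
  have finE: "finite E" using fin_all_edges[OF less.prems(1)] less.prems(3) by (rule finite_subset[rotated])
  show ?case
  proof (cases "card V = 1")
    case True
    then obtain v where V: "V = {v}" using card_1_singleton_iff[THEN iffD1, OF True[unfolded One_nat_def]] by blast
    then have "E = {}" using less.prems(3) all_edges_single[of v] by simp
    then show ?thesis using V all_edges_single[of v] True by simp
  next
    case False
    define n where "n = card V"
    have "n > 0" using less.prems(1,2) n_def by (simp add: card_gt_0_iff)
    then have n2: "n \<ge> 2" using False n_def by linarith
    define deg where "deg x = card {e\<in>E. x\<in>e}" for x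
    obtain v0 where "v0 \<in> V" using less.prems(2) by blast
    then obtain v where v: "v\<in>V" "\<forall>x\<in>V. deg v \<le> deg x"
      using ex_has_least_nat[of "\<lambda>x. x\<in>V" v0 deg] by blast
    define V' where "V' = V - {v}"
    define E' where "E' = {e\<in>E. v\<notin>e}"
    define Ev where "Ev = {e\<in>E. v\<in>e}"
    define K where "K = C`Ev - C`E'"
    have cV': "card V' = n - 1" using v(1) less.prems(1) n_def V'_def by simp
    have fV': "finite V'" using less.prems(1) V'_def by simp
    have neV': "V' \<noteq> {}" using cV' n2 by auto
    have E'sub: "E' \<subseteq> all_edges V'" using less.prems(3) unfolding E'_def V'_def all_edges_def by auto
    have rbE': "\<not> has_rainbow_triangle E' C" by (rule no_rb_mono[OF _ less.prems(4)]) (auto simp: E'_def)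
    have IH: "2*(card E' + card (C`E') + 1) \<le> (n-1) * (n - 1 + 1) \<and>
      (2*(card E' + card (C`E') + 1) = (n-1) * (n-1 + 1) \<longrightarrow> E' = all_edges V')"
      using less.hyps[OF _ fV' neV' E'sub rbE'] cV' n2 n_def by simp
    have cardE: "card E = card E' + card Ev"
    proof -
      have "E = E' \<union> Ev" "E' \<inter> Ev = {}" unfolding E'_def Ev_def by auto
      then show ?thesis using finE card_Un_disjoint
        by (metis finite_Un)
    qed
    have cardC: "card (C`E) \<le> card (C`E') + card K"
    proof -
      have "C`E = C`E' \<union> K" unfolding K_def E'_def Ev_def by auto
      then show ?thesis by (simp add: card_Un_le)
    qed
    have Ev_sub: "Ev \<subseteq> (\<lambda>y. {v,y}) ` V'"
    proof
      fix e assume e: "e \<in> Ev"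
      then have "e \<in> all_edges V" "v \<in> e" using less.prems(3) Ev_def by auto
      then obtain x y where "e = {x,y}" "x \<noteq> y" "x\<in>V" "y\<in>V" using all_edgesE by metis
      then show "e \<in> (\<lambda>y. {v,y}) ` V'" using \<open>v\<in>e\<close> V'_def by auto
    qed
    have cimg: "card ((\<lambda>y. {v,y}) ` V') \<le> n - 1" using card_image_le[OF fV'] cV' by metis
    have dle: "card Ev \<le> n - 1"
      using card_mono[OF finite_imageI[OF fV'] Ev_sub] cimg by linarith
    have main: "card Ev + card K \<le> n \<and> (card K \<ge> 2 \<longrightarrow> E' \<noteq> all_edges V')"
    proof (cases "K = {}")
      case True
      then show ?thesis using dle by simp
    next
      case False
      define g where "g c = (SOME y. y \<in> V' \<and> {v,y} \<in> E \<and> C{v,y} = c)" for c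
      have g: "g c \<in> V' \<and> {v, g c} \<in> E \<and> C{v, g c} = c" if cK: "c \<in> K" for c
      proof -
        obtain e where "e \<in> Ev" "C e = c" using cK K_def by auto
        then obtain y where "y \<in> V'" "e = {v,y}" "e \<in> E" using Ev_sub Ev_def by auto
        then have "\<exists>y. y \<in> V' \<and> {v,y} \<in> E \<and> C{v,y} = c" using \<open>C e = c\<close> by blast
        then show ?thesis unfolding g_def by (rule someI_ex)
      qed
      define X where "X = g ` K"
      have injg: "inj_on g K"
      proof (rule inj_onI)
        fix c1 c2 assume "c1 \<in> K" "c2 \<in> K" "g c1 = g c2"
        then show "c1 = c2" using g by metis
      qed
      have finK: "finite K" unfolding K_def using finE Ev_def by auto
      have cardX: "card X = card K" unfolding X_def using card_image[OF injg] .
      have XV': "X \<subseteq> V'" unfolding X_def using g by auto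
      have indep: "{x,y} \<notin> E" if xyX: "x\<in>X" "y\<in>X" "x\<noteq>y" for x y
      proof
        assume xy: "{x,y} \<in> E"
        obtain c1 c2 where c: "c1 \<in> K" "c2 \<in> K" "x = g c1" "y = g c2" using xyX X_def by auto
        have g1: "x \<in> V'" "{v,x} \<in> E" "C{v,x} = c1" using g[OF c(1)] c by auto
        have g2: "y \<in> V'" "{v,y} \<in> E" "C{v,y} = c2" using g[OF c(2)] c by auto
        have "c1 \<noteq> c2" using c xyX by auto
        have "{x,y} \<in> E'" using xy g1 g2 V'_def E'_def by auto
        then have "C{x,y} \<in> C`E'" by (rule imageI)
        moreover have "c1 \<notin> C`E'" "c2 \<notin> C`E'" using c(1,2) K_def by auto
        ultimately have "C{x,y} \<noteq> c1" "C{x,y} \<noteq> c2" by auto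
        have "has_rainbow_triangle E C"
          unfolding has_rainbow_triangle_def
          apply (rule exI[of _ v], rule exI[of _ x], rule exI[of _ y])
          using g1 g2 \<open>c1 \<noteq> c2\<close> \<open>C{x,y} \<noteq> c1\<close> \<open>C{x,y} \<noteq> c2\<close> xyX xy V'_def
          by (auto simp: insert_commute)
        then show False using less.prems(4) by blast
      qed
      obtain x1 where x1: "x1 \<in> X" using False X_def by auto
      have sub1: "{e\<in>E. x1\<in>e} \<subseteq> (\<lambda>y. {x1,y}) ` (V - X)"
      proof
        fix e assume e: "e \<in> {e\<in>E. x1\<in>e}"
        then have "e \<in> all_edges V" "x1 \<in> e" "e \<in> E" using less.prems(3) by auto
        then obtain x y where xy: "e = {x,y}" "x \<noteq> y" "x\<in>V" "y\<in>V" using all_edgesE by metis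
        then obtain z where z: "e = {x1, z}" "z \<in> V" "z \<noteq> x1" using \<open>x1 \<in> e\<close> by auto
        have "z \<notin> X" using indep[OF x1 _ z(3)[symmetric]] z \<open>e\<in>E\<close> by auto
        then show "e \<in> (\<lambda>y. {x1,y}) ` (V - X)" using z by auto
      qed
      have XV: "X \<subseteq> V" using XV' V'_def by auto
      have "deg x1 \<le> card (V - X)"
        unfolding deg_def
        using card_mono[OF finite_imageI sub1] card_image_le[of "V - X" "\<lambda>y. {x1,y}"] less.prems(1)
        by (meson finite_Diff le_trans)
      also have "\<dots> = n - card K" using card_Diff_subset[OF finite_subset[OF XV less.prems(1)] XV] cardX n_def by simp
      finally have "deg v \<le> n - card K" using v(2) x1 XV by force
      moreover have "card K \<le> n" using cardX card_mono[OF less.prems(1) XV] n_def by simp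
      moreover have "deg v = card Ev" unfolding deg_def Ev_def by simp
      ultimately have A: "card Ev + card K \<le> n" by linarith
      have B: "E' \<noteq> all_edges V'" if "card K \<ge> 2"
      proof -
        have "card X \<ge> 2" using that cardX by simp
        then have "\<not> card X \<le> Suc 0" by simp
        moreover have "finite X" using finK X_def by simp
        ultimately have "\<not> (\<forall>a\<in>X. \<forall>b\<in>X. a = b)" using card_le_Suc0_iff_eq by blast
        then obtain x y where "x \<in> X" "y \<in> X" "x \<noteq> y" by blast
        then have "{x,y} \<in> all_edges V'" using XV' by (intro edge_in_all) auto
        moreover have "{x,y} \<notin> E'" using indep \<open>x \<in> X\<close> \<open>y \<in> X\<close> \<open>x \<noteq> y\<close> E'_def by auto
        ultimately show ?thesis by auto
      qed
      show ?thesis using A B by blast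
    qed
    have nn: "n * (n + 1) = (n - 1) * (n - 1 + 1) + 2 * n" using n2
      by (cases n) auto
    have IH1: "2*(card E' + card (C`E') + 1) \<le> (n-1) * (n - 1 + 1)" using IH by blast
    have main1: "card Ev + card K \<le> n" using main by blast
    note A3 = arith3[OF IH1 main1 cardE cardC nn]
    have le: "2*(card E + card (C`E) + 1) \<le> n * (n + 1)"
      using A3 by blast
    moreover have "E = all_edges V" if eq: "2*(card E + card (C`E) + 1) = n * (n + 1)"
    proof -
      have "2*(card E' + card (C`E') + 1) = (n-1) * (n - 1 + 1)" "card Ev + card K = n"
        using A3 eq by blast+
      then have E'eq: "E' = all_edges V'" using IH by blast
      then have "card K \<le> 1" using main by auto
      then have "card Ev = n - 1" using \<open>card Ev + card K = n\<close> dle by linarith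
      then have "card Ev = card ((\<lambda>y. {v,y}) ` V')" using card_mono[OF finite_imageI[OF fV'] Ev_sub] cimg
        by linarith
      then have Evq: "Ev = (\<lambda>y. {v,y}) ` V'"
        using card_subset_eq[OF finite_imageI[OF fV'] Ev_sub] by simp
      show ?thesis
      proof
        show "E \<subseteq> all_edges V" by (rule less.prems(3))
        show "all_edges V \<subseteq> E"
        proof
          fix e assume e: "e \<in> all_edges V"
          then obtain x y where xy: "e = {x,y}" "x \<noteq> y" "x\<in>V" "y\<in>V" using all_edgesE by metis
          show "e \<in> E"
          proof (cases "v \<in> e")
            case True
            then have "e \<in> (\<lambda>y. {v,y}) ` V'" using xy V'_def by auto
            then show ?thesis using Evq Ev_def by auto
          next
            case False
            then have "{x,y} \<in> all_edges V'" using xy V'_def by (intro edge_in_all) auto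
            then have "e \<in> all_edges V'" using xy by simp
            then show ?thesis using E'eq E'_def by auto
          qed
        qed
      qed
    qed
    ultimately show ?thesis using n_def by blast
  qed
qed


lemma arith_aux: "2*(a+c+1) \<le> (Y::nat) \<Longrightarrow> 2*a = X \<Longrightarrow> Y = X + 2*m \<Longrightarrow> c \<le> m-1"
  by presburger

lemma arith_aux2: "2*B = (X::nat) \<Longrightarrow> 2 \<le> X \<Longrightarrow> B - 1 \<le> S \<Longrightarrow> 2*(S+1) \<le> X \<Longrightarrow> 2*(S+1) = X"
  by presburger

lemma nn_aux: "(n::nat) \<ge> 1 \<Longrightarrow> n*(n+1) = n*(n-1) + 2*n"
  by (cases n) auto

lemma arith_aux4: "2*(A + c + 1) = (Y::nat) \<Longrightarrow> 2*A = X \<Longrightarrow> Y = X + 2*n \<Longrightarrow> c = n - 1"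
  by simp

lemma bound:
  assumes "finite W" "W \<noteq> {}" "\<not> has_rainbow_triangle (all_edges W) C"
  shows "card (C ` all_edges W) \<le> card W - 1"
proof -
  have "2*(card (all_edges W) + card (C`all_edges W) + 1) \<le> card W * (card W + 1)"
    using ineq[OF assms(1,2) order_refl assms(3)] by blast
  moreover have "2 * card (all_edges W) = card W * (card W - 1)" using card_all_edges[OF assms(1)] .
  moreover have "card W * (card W + 1) = card W * (card W - 1) + 2 * card W"
    using assms by (cases "card W") auto
  ultimately show ?thesis by (rule arith_aux)
qed

lemma count:
  assumes "V1 \<union> V2 = V" "\<forall>x\<in>V1. \<forall>y\<in>V2. C{x,y} = c"
  shows "C ` all_edges V \<subseteq> C ` all_edges V1 \<union> C ` all_edges V2 \<union> {c}"
proof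
  fix d assume "d \<in> C ` all_edges V"
  then obtain e where e: "e \<in> all_edges V" "d = C e" by auto
  then obtain x y where xy: "e = {x,y}" "x \<noteq> y" "x\<in>V" "y\<in>V" using all_edgesE by metis
  show "d \<in> C ` all_edges V1 \<union> C ` all_edges V2 \<union> {c}"
  proof (cases "x \<in> V1")
    case True
    show ?thesis
    proof (cases "y \<in> V1")
      case True
      then have "{x,y} \<in> all_edges V1" using \<open>x\<in>V1\<close> xy(2) by (intro edge_in_all)
      then show ?thesis using xy e by auto
    next
      case False
      then have "y \<in> V2" using xy assms(1) by auto
      then show ?thesis using \<open>x\<in>V1\<close> xy e assms(2) by auto
    qed
  next
    case False
    then have x2: "x \<in> V2" using xy assms(1) by auto
    show ?thesis
    proof (cases "y \<in> V1")
      case True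
      then have "C{y,x} = c" using x2 assms(2) by auto
      then show ?thesis using xy e by (auto simp: insert_commute)
    next
      case False
      then have "y \<in> V2" using xy assms(1) by auto
      then have "{x,y} \<in> all_edges V2" using x2 xy(2) by (intro edge_in_all)
      then show ?thesis using xy e by auto
    qed
  qed
qed

lemma card_le_split:
  assumes "finite V" "V1 \<union> V2 = V" "\<forall>x\<in>V1. \<forall>y\<in>V2. C{x,y} = c"
  shows "card (C ` all_edges V) \<le> card (C ` all_edges V1) + card (C ` all_edges V2) + 1"
proof -
  have f: "finite (all_edges W)" if "W \<subseteq> V" for W
    using fin_all_edges finite_subset that assms(1) by metis
  have "C ` all_edges V \<subseteq> C ` all_edges V1 \<union> C ` all_edges V2 \<union> {c}"
    by (rule count[OF assms(2,3)])
  moreover have "finite (C ` all_edges V1 \<union> C ` all_edges V2 \<union> {c})"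
    using f assms(2) by blast
  ultimately have "card (C ` all_edges V) \<le> card (C ` all_edges V1 \<union> C ` all_edges V2 \<union> {c})"
    by (intro card_mono)
  also have "\<dots> \<le> card (C ` all_edges V1 \<union> C ` all_edges V2) + card {c}" by (rule card_Un_le)
  also have "\<dots> \<le> card (C ` all_edges V1) + card (C ` all_edges V2) + 1"
    using card_Un_le by simp
  finally show ?thesis .
qed

lemma cut:
  assumes "finite V" "card V \<ge> 2" "\<not> has_rainbow_triangle (all_edges V) C"
    "card (C ` all_edges V) = card V - 1"
  shows "\<exists>V1 V2 c. V1 \<union> V2 = V \<and> V1 \<inter> V2 = {} \<and> V1 \<noteq> {} \<and> V2 \<noteq> {} \<and> (\<forall>x\<in>V1. \<forall>y\<in>V2. C{x,y} = c)"
  using assms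
proof (induction "card V" arbitrary: V rule: less_induct)
  case less
  define n where "n = card V"
  have "V \<noteq> {}" using less.prems(2) by (metis card.empty not_numeral_le_zero)
  then obtain v where v: "v \<in> V" by blast
  have nr: "\<not> has_rainbow_triangle (all_edges W) C" if "W \<subseteq> V" for W
    using no_rb_mono[OF all_edges_mono[OF that] less.prems(3)] .
  have "card (C ` all_edges (V - {v})) \<le> card (V - {v}) - 1"
  proof -
    have "card (V - {v}) = card V - 1" using v less.prems(1) by simp
    then have "card (V - {v}) \<ge> 1" using less.prems(2) by linarith
    then have "V - {v} \<noteq> {}" by (metis card.empty not_one_le_zero)
    then show ?thesis by (rule bound[OF finite_Diff[OF less.prems(1)] _ nr[OF Diff_subset]])
  qed
  moreover have "card (V - {v}) = card V - 1" using v less.prems(1) by simp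
  ultimately have lt: "card (C ` all_edges (V - {v})) < card (C ` all_edges V)"
    using less.prems(2,4) by arith
  have "\<not> C ` all_edges V \<subseteq> C ` all_edges (V - {v})"
  proof
    assume "C ` all_edges V \<subseteq> C ` all_edges (V - {v})"
    then have "card (C ` all_edges V) \<le> card (C ` all_edges (V - {v}))"
      using fin_all_edges[OF finite_Diff[OF less.prems(1)]] by (intro card_mono) auto
    then show False using lt by simp
  qed
  then obtain a where a: "a \<in> C ` all_edges V" "a \<notin> C ` all_edges (V - {v})" by blast
  have aonly: "v \<in> e" if "e \<in> all_edges V" "C e = a" for e
  proof (rule ccontr)
    assume "v \<notin> e"
    then have "e \<in> all_edges (V - {v})" using that unfolding all_edges_def by auto
    then show False using that a by auto
  qed
  define A where "A = {x \<in> V - {v}. C{v,x} = a}"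
  define B where "B = V - {v} - A"
  obtain e0 where e0: "e0 \<in> all_edges V" "C e0 = a" using a by auto
  then obtain x y where xy: "e0 = {x,y}" "x \<noteq> y" "x\<in>V" "y\<in>V" using all_edgesE by metis
  have "A \<noteq> {}"
  proof -
    have "v \<in> e0" using aonly e0 by blast
    then obtain z where "e0 = {v,z}" "z \<in> V" "z \<noteq> v" using xy by auto
    then have "z \<in> A" using e0 A_def by auto
    then show ?thesis by auto
  qed
  have key: "C{x,y} = C{v,y}" if "x \<in> A" "y \<in> B" for x y
  proof -
    have d: "v \<noteq> x" "x \<noteq> y" "v \<noteq> y" "x \<in> V" "y \<in> V" using that A_def B_def by auto
    have c1: "C{v,x} = a" using that A_def by auto
    have c2: "C{v,y} \<noteq> a" using that A_def B_def by auto
    have c3: "C{x,y} \<noteq> a" using aonly[OF edge_in_all[OF d(4,5,2)]] d by auto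
    show ?thesis
      using no_rb[OF less.prems(3) d(1,2,3) edge_in_all[OF v d(4) d(1)] edge_in_all[OF d(4,5,2)]
          edge_in_all[OF v d(5) d(3)]] c1 c2 c3 by metis
  qed
  show ?case
  proof (cases "B = {}")
    case True
    then have "{v} \<union> A = V" "{v} \<inter> A = {}" using v A_def B_def by auto
    moreover have "\<forall>x\<in>{v}. \<forall>y\<in>A. C{x,y} = a" using A_def by auto
    ultimately show ?thesis using \<open>A \<noteq> {}\<close> by blast
  next
    case False
    define P where "P = insert v A"
    define V' where "V' = insert v B"
    have PV: "P \<subseteq> V" "V' \<subseteq> V" using v A_def B_def P_def V'_def by auto
    have fP: "finite P" "finite V'" "finite A" "finite B"
      using PV less.prems(1) finite_subset P_def V'_def by auto
    have cardV: "card V = 1 + card A + card B"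
    proof -
      have "V = insert v (A \<union> B)" "v \<notin> A \<union> B" "A \<inter> B = {}" using v A_def B_def by auto
      then show ?thesis using fP card_Un_disjoint by simp
    qed
    have cP: "card P = card A + 1" using fP P_def A_def by simp
    have cV': "card V' = card B + 1" using fP V'_def B_def by simp
    have sub: "C ` all_edges V \<subseteq> C ` all_edges P \<union> C ` all_edges V'"
    proof
      fix d assume "d \<in> C ` all_edges V"
      then obtain e where e: "e \<in> all_edges V" "d = C e" by auto
      then obtain x y where xy: "e = {x,y}" "x \<noteq> y" "x\<in>V" "y\<in>V" using all_edgesE by metis
      have cases: "x \<in> P \<and> y \<in> P \<or> x \<in> V' \<and> y \<in> V' \<or> x \<in> A \<and> y \<in> B \<or> x \<in> B \<and> y \<in> A"
        using xy P_def V'_def A_def B_def by auto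
      show "d \<in> C ` all_edges P \<union> C ` all_edges V'"
      proof -
        { assume "x \<in> P \<and> y \<in> P"
          then have "{x,y} \<in> all_edges P" using xy(2) by (intro edge_in_all) auto
          then have ?thesis using e xy by auto }
        moreover
        { assume "x \<in> V' \<and> y \<in> V'"
          then have "{x,y} \<in> all_edges V'" using xy(2) by (intro edge_in_all) auto
          then have ?thesis using e xy by auto }
        moreover
        { assume h: "x \<in> A \<and> y \<in> B"
          then have "C e = C{v,y}" using key xy by auto
          moreover have "{v,y} \<in> all_edges V'" using h V'_def B_def by (intro edge_in_all) auto
          ultimately have ?thesis using e by auto }
        moreover
        { assume h: "x \<in> B \<and> y \<in> A"
          then have "C{y,x} = C{v,x}" by (intro key) auto
          then have "C e = C{v,x}" using xy by (simp add: insert_commute)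
          moreover have "{v,x} \<in> all_edges V'" using h V'_def B_def by (intro edge_in_all) auto
          ultimately have ?thesis using e by auto }
        ultimately show ?thesis using cases by blast
      qed
    qed
    have fe: "finite (C ` all_edges W)" if "finite W" for W :: "'a set"
      using that fin_all_edges by blast
    have "card V - 1 \<le> card (C ` all_edges P) + card (C ` all_edges V')"
      using card_mono[OF _ sub] fe fP card_Un_le[of "C ` all_edges P" "C ` all_edges V'"] less.prems(4)
      by (metis finite_UnI le_trans)
    moreover have "card (C ` all_edges P) \<le> card P - 1" using bound[OF fP(1) _ nr[OF PV(1)]] P_def by auto
    moreover have bV': "card (C ` all_edges V') \<le> card V' - 1" using bound[OF fP(2) _ nr[OF PV(2)]] V'_def by auto
    ultimately have eqV': "card (C ` all_edges V') = card V' - 1" using cardV cP cV' by linarith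
    have "card V' < card V" "card V' \<ge> 2" using cardV cV' \<open>A \<noteq> {}\<close> False fP
      by (auto simp: card_gt_0_iff Suc_le_eq)
    then obtain W1 W2 c where W: "W1 \<union> W2 = V'" "W1 \<inter> W2 = {}" "W1 \<noteq> {}" "W2 \<noteq> {}"
      "\<forall>x\<in>W1. \<forall>y\<in>W2. C{x,y} = c"
      using less.hyps[OF _ fP(2) _ nr[OF PV(2)] eqV'] by blast
    have "\<exists>U1 U2. U1 \<union> U2 = V' \<and> U1 \<inter> U2 = {} \<and> U1 \<noteq> {} \<and> U2 \<noteq> {} \<and>
      (\<forall>x\<in>U1. \<forall>y\<in>U2. C{x,y} = c) \<and> v \<in> U1"
    proof (cases "v \<in> W1")
      case True then show ?thesis using W by blast
    next
      case False
      then have "v \<in> W2" using W(1) V'_def by auto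
      moreover have "\<forall>x\<in>W2. \<forall>y\<in>W1. C{x,y} = c"
      proof (intro ballI)
        fix x y assume "x \<in> W2" "y \<in> W1"
        then have "C{y,x} = c" using W(5) by blast
        then show "C{x,y} = c" by (simp add: insert_commute)
      qed
      ultimately show ?thesis using W(1-4) by blast
    qed
    then obtain U1 U2 where U: "U1 \<union> U2 = V'" "U1 \<inter> U2 = {}" "U1 \<noteq> {}" "U2 \<noteq> {}"
      "\<forall>x\<in>U1. \<forall>y\<in>U2. C{x,y} = c" "v \<in> U1" by blast
    have "U1 \<union> A \<union> U2 = V" using U(1) V'_def A_def B_def v by auto
    moreover have "(U1 \<union> A) \<inter> U2 = {}" using U(1,2,6) V'_def A_def B_def by auto
    moreover have "\<forall>x\<in>U1 \<union> A. \<forall>y\<in>U2. C{x,y} = c"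
    proof (intro ballI)
      fix x y assume x: "x \<in> U1 \<union> A" and y: "y \<in> U2"
      show "C{x,y} = c"
      proof (cases "x \<in> U1")
        case True then show ?thesis using U(5) y by auto
      next
        case False
        then have "x \<in> A" using x by auto
        moreover have "y \<in> B" using y U(1,2,6) V'_def by auto
        ultimately have "C{x,y} = C{v,y}" by (rule key)
        then show ?thesis using U(5,6) y by auto
      qed
    qed
    ultimately show ?thesis using U(3,4) by (metis Un_empty sup_assoc)
  qed
qed

lemma G0_thm:
  assumes "finite V" "card V \<ge> 1" "\<not> has_rainbow_triangle (all_edges V) C"
    "card (C ` all_edges V) = card V - 1"
  shows "G0 V C"
  using assms
proof (induction "card V" arbitrary: V rule: less_induct)
  case less
  show ?case
  proof (cases "card V = 1")
    case True
    then obtain v where "V = {v}" using card_1_singleton_iff[THEN iffD1, OF True[unfolded One_nat_def]] by blast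
    then show ?thesis by (simp add: G0.single)
  next
    case False
    then have n2: "card V \<ge> 2" using less.prems(2) by linarith
    obtain V1 V2 c where W: "V1 \<union> V2 = V" "V1 \<inter> V2 = {}" "V1 \<noteq> {}" "V2 \<noteq> {}"
      "\<forall>x\<in>V1. \<forall>y\<in>V2. C{x,y} = c"
      using cut[OF less.prems(1) n2 less.prems(3,4)] by blast
    have f: "finite V1" "finite V2" using W(1) less.prems(1) by auto
    have nr: "\<not> has_rainbow_triangle (all_edges W) C" if "W \<subseteq> V" for W
      using no_rb_mono[OF all_edges_mono[OF that] less.prems(3)] .
    have cs: "card V = card V1 + card V2" using card_Un_disjoint[OF f W(2)] W(1) by simp
    have p1: "card V1 \<ge> 1" "card V2 \<ge> 1" using f W(3,4) by (auto simp: Suc_le_eq card_gt_0_iff)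
    have b1: "card (C ` all_edges V1) \<le> card V1 - 1" using bound[OF f(1) W(3) nr] W(1) by auto
    have b2: "card (C ` all_edges V2) \<le> card V2 - 1" using bound[OF f(2) W(4) nr] W(1) by auto
    have "card (C ` all_edges V) \<le> card (C ` all_edges V1) + card (C ` all_edges V2) + 1"
      using card_le_split[OF less.prems(1) W(1,5)] .
    then have e1: "card (C ` all_edges V1) = card V1 - 1" and e2: "card (C ` all_edges V2) = card V2 - 1"
      using b1 b2 cs p1 less.prems(4) by linarith+
    have "G0 V1 C" using less.hyps[OF _ f(1) p1(1) nr e1] cs p1 W(1) by auto
    moreover have "G0 V2 C" using less.hyps[OF _ f(2) p1(2) nr e2] cs p1 W(1) by auto
    ultimately show ?thesis
      using G0.split[OF less.prems(1) n2 _ W(1-4)] W(5) less.prems(4)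
      unfolding num_colors_def by blast
  qed
qed

theorem theorem2:
  fixes V :: "'a set" and E :: "'a set set" and C :: "'a set \<Rightarrow> nat"
  assumes "is_graph V E"
    and "card V \<ge> 1"
    and "card E + num_colors E C \<ge> (card V + 1 choose 2) - 1"
    and "\<not> has_rainbow_triangle E C"
  shows "E = all_edges V \<and> G0 V C"
proof -
  have fV: "finite V" and sub: "E \<subseteq> all_edges V" using assms(1) unfolding is_graph_def by auto
  have ne: "V \<noteq> {}" using assms(2) by auto
  define n where "n = card V"
  have I: "2*(card E + card (C`E) + 1) \<le> n * (n + 1) \<and>
    (2*(card E + card (C`E) + 1) = n * (n + 1) \<longrightarrow> E = all_edges V)"
    using ineq[OF fV ne sub assms(4)] n_def by simp
  have ch: "2 * (n + 1 choose 2) = n * (n + 1)"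
  proof -
    have "even ((n+1) * n)" by (cases "even n") auto
    then show ?thesis by (simp add: choose_two mult.commute)
  qed
  have "1 * 2 \<le> n * (n+1)" using assms(2) n_def by (intro mult_le_mono) auto
  then have "n * (n+1) \<ge> 2" by simp
  then have "2*(card E + card (C`E) + 1) = n * (n + 1)"
    using arith_aux2[OF ch _ _ conjunct1[OF I]] assms(3)[folded n_def] unfolding num_colors_def by blast
  then have Eq: "E = all_edges V" using I by blast
  moreover have "card (C ` all_edges V) = card V - 1"
  proof -
    have "2 * card (all_edges V) = n * (n - 1)" using card_all_edges[OF fV] n_def by simp
    moreover have "n * (n + 1) = n * (n - 1) + 2 * n" using assms(2) n_def by (intro nn_aux) simp
    ultimately show ?thesis
      using arith_aux4[OF \<open>2*(card E + card (C`E) + 1) = n * (n + 1)\<close>[unfolded Eq]] n_def by simp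
  qed
  ultimately show ?thesis using G0_thm[OF fV assms(2)] assms(4) by blast
qed

end
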